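(* Let $\mathcal{S}=(Q,E,\delta,Q_0,\Sigma,\ell)$ be a labeled finite-state automaton, $Q_S\subset Q$ a set of secret states, and $K$ a positive integer with $K>2^{|Q|}-2$. Then $\mathcal{S}$ is infinite-step opaque with respect to $Q_S$ if and only if $\mathcal{S}$ is $K$-step opaque with respect to $Q_S$.
   Context: A labeled finite-state automaton is $\mathcal{S}=(Q,E,\delta,Q_0,\Sigma,\ell)$ with finite state set $Q$, finite event alphabet $E$, transition relation $\delta\subset Q\times E\times Q$, initial states $Q_0\subset Q$, finite output alphabet $\Sigma$, and labeling $\ell:E\to\Sigma\cup\{\epsilon\}$ ($\epsilon$ the empty word), extended morphically to event words. A run $q\xrightarrow{s}q'$ ($s\in E^*$) means a sequence of transitions from $q$ to $q'$ reading $s$ (the empty word gives $q=q'$). Infinite-step opacity: $\mathcal{S}$ is infinite-step opaque w.r.t. $Q_S$ if for every run $q_0\xrightarrow{s_1}q_1\xrightarrow{s_2}q_2$ with $q_0\in Q_0$ and $q_1\in Q_S$ there is a run $q_0'\xrightarrow{s_1'}q_1'\xrightarrow{s_2'}q_2'$ with $q_0'\in Q_0$, $q_1'\in Q\setminus Q_S$, $\ell(s_1)=\ell(s_1')$, $\ell(s_2)=\ell(s_2')$. $K$-step opacity ($K$ a positive integer): same as infinite-step opacity but the requirement is only imposed on runs with $|\ell(s_2)|\le K$. *)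

theory Defs
  imports Main
begin

text \<open>Labeled finite-state automaton S = (Q, E, delta, Q0, Sig, ell).
  The labeling ell maps events to 's option, where None encodes the empty word epsilon
  and Some a encodes the output letter a.\<close>

definition is_LFSA ::
  "'q set \<Rightarrow> 'e set \<Rightarrow> ('q \<times> 'e \<times> 'q) set \<Rightarrow> 'q set \<Rightarrow> 's set \<Rightarrow> ('e \<Rightarrow> 's option) \<Rightarrow> bool" where
  "is_LFSA Q E delta Q0 Sig ell \<longleftrightarrow>
     finite Q \<and> finite E \<and> finite Sig \<and> delta \<subseteq> Q \<times> E \<times> Q \<and> Q0 \<subseteq> Q \<and>
     (\<forall>e\<in>E. ell e = None \<or> (\<exists>a\<in>Sig. ell e = Some a))"

fun run :: "('q \<times> 'e \<times> 'q) set \<Rightarrow> 'q \<Rightarrow> 'e list \<Rightarrow> 'q \<Rightarrow> bool" where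
  "run delta q [] q' \<longleftrightarrow> q = q'"
| "run delta q (e # s) q' \<longleftrightarrow> (\<exists>p. (q, e, p) \<in> delta \<and> run delta p s q')"

definition lab :: "('e \<Rightarrow> 's option) \<Rightarrow> 'e list \<Rightarrow> 's list" where
  "lab ell s = concat (map (\<lambda>e. case ell e of None \<Rightarrow> [] | Some a \<Rightarrow> [a]) s)"

definition infinite_step_opaque ::
  "'q set \<Rightarrow> ('q \<times> 'e \<times> 'q) set \<Rightarrow> 'q set \<Rightarrow> ('e \<Rightarrow> 's option) \<Rightarrow> 'q set \<Rightarrow> bool" where
  "infinite_step_opaque Q delta Q0 ell QS \<longleftrightarrow>
     (\<forall>q0 q1 q2 s1 s2. q0 \<in> Q0 \<and> q1 \<in> QS \<and> run delta q0 s1 q1 \<and> run delta q1 s2 q2 \<longrightarrow>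
        (\<exists>q0' q1' q2' s1' s2'. q0' \<in> Q0 \<and> q1' \<in> Q - QS \<and>
            run delta q0' s1' q1' \<and> run delta q1' s2' q2' \<and>
            lab ell s1 = lab ell s1' \<and> lab ell s2 = lab ell s2'))"

definition K_step_opaque ::
  "nat \<Rightarrow> 'q set \<Rightarrow> ('q \<times> 'e \<times> 'q) set \<Rightarrow> 'q set \<Rightarrow> ('e \<Rightarrow> 's option) \<Rightarrow> 'q set \<Rightarrow> bool" where
  "K_step_opaque K Q delta Q0 ell QS \<longleftrightarrow>
     (\<forall>q0 q1 q2 s1 s2. q0 \<in> Q0 \<and> q1 \<in> QS \<and> run delta q0 s1 q1 \<and> run delta q1 s2 q2 \<and>
          length (lab ell s2) \<le> K \<longrightarrow>
        (\<exists>q0' q1' q2' s1' s2'. q0' \<in> Q0 \<and> q1' \<in> Q - QS \<and>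
            run delta q0' s1' q1' \<and> run delta q1' s2' q2' \<and>
            lab ell s1 = lab ell s1' \<and> lab ell s2 = lab ell s2'))"

end

theory Submission
  imports Defs
begin

lemma run_append: "run d q (s @ t) q' \<longleftrightarrow> (\<exists>p. run d q s p \<and> run d p t q')"
  by (induction s arbitrary: q) auto

lemma lab_append: "lab ell (s @ t) = lab ell s @ lab ell t"
  by (simp add: lab_def)

lemma lab_Cons: "lab ell (e # s) = (case ell e of None \<Rightarrow> [] | Some a \<Rightarrow> [a]) @ lab ell s"
  by (simp add: lab_def)

lemma run_split:
  assumes "run d q s q'" "lab ell s = v1 @ v2"
  shows "\<exists>s1 s2 p. run d q s1 p \<and> run d p s2 q' \<and> lab ell s1 = v1 \<and> lab ell s2 = v2"
  using assms
proof (induction s arbitrary: q v1)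
  case Nil
  then show ?case by (intro exI[of _ "[]"] exI[of _ "[]"] exI[of _ q]) (auto simp: lab_def)
next
  case (Cons e s)
  from Cons.prems(1) obtain r where r: "(q, e, r) \<in> d" "run d r s q'" by auto
  show ?case
  proof (cases "ell e")
    case None
    then have "lab ell s = v1 @ v2" using Cons.prems(2) by (simp add: lab_Cons)
    from Cons.IH[OF r(2) this] obtain s1 s2 p where
      "run d r s1 p" "run d p s2 q'" "lab ell s1 = v1" "lab ell s2 = v2" by blast
    then show ?thesis using r None
      by (intro exI[of _ "e # s1"] exI[of _ s2] exI[of _ p]) (auto simp: lab_Cons)
  next
    case (Some a)
    show ?thesis
    proof (cases v1)
      case Nil
      then show ?thesis using Cons.prems
        by (intro exI[of _ "[]"] exI[of _ "e # s"] exI[of _ q]) (auto simp: lab_def)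
    next
      case (Cons b v1')
      with Some Cons.prems(2) have "a = b" "lab ell s = v1' @ v2" by (auto simp: lab_Cons)
      from Cons.IH[OF r(2) this(2)] obtain s1 s2 p where
        "run d r s1 p" "run d p s2 q'" "lab ell s1 = v1'" "lab ell s2 = v2" by blast
      then show ?thesis using r Some Cons \<open>a = b\<close>
        by (intro exI[of _ "e # s1"] exI[of _ s2] exI[of _ p]) (auto simp: lab_Cons)
    qed
  qed
qed

lemma run_in_Q:
  assumes "run d q s q'" "q \<in> Q" "d \<subseteq> Q \<times> E \<times> Q"
  shows "q' \<in> Q"
  using assms by (induction s arbitrary: q) auto

theorem corollary2:
  fixes Q :: "'q set" and E :: "'e set" and delta :: "('q \<times> 'e \<times> 'q) set"
    and Q0 QS :: "'q set" and Sig :: "'s set" and ell :: "'e \<Rightarrow> 's option" and K :: nat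
  assumes "is_LFSA Q E delta Q0 Sig ell"
    and "QS \<subseteq> Q"
    and "K > 0"
    and "int K > 2 ^ card Q - 2"
  shows "infinite_step_opaque Q delta Q0 ell QS \<longleftrightarrow> K_step_opaque K Q delta Q0 ell QS"
proof
  assume "infinite_step_opaque Q delta Q0 ell QS"
  then show "K_step_opaque K Q delta Q0 ell QS"
    unfolding infinite_step_opaque_def K_step_opaque_def by blast
next
  assume KO: "K_step_opaque K Q delta Q0 ell QS"
  have finQ: "finite Q" and dQ: "delta \<subseteq> Q \<times> E \<times> Q" and Q0Q: "Q0 \<subseteq> Q"
    using assms(1) unfolding is_LFSA_def by auto
  have Kb: "2 ^ card Q \<le> K + 1"
  proof -
    have "int (2 ^ card Q) \<le> int K + 1" using assms(4) by simp
    then show ?thesis by linarith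
  qed
  show "infinite_step_opaque Q delta Q0 ell QS"
    unfolding infinite_step_opaque_def
  proof (intro allI impI)
    fix q0 q1 q2 s1 s2
    assume H: "q0 \<in> Q0 \<and> q1 \<in> QS \<and> run delta q0 s1 q1 \<and> run delta q1 s2 q2"
    define u where "u = lab ell s1"
    define NS where "NS w \<longleftrightarrow> (\<exists>q0' q1' q2' s1' s2'. q0' \<in> Q0 \<and> q1' \<in> Q - QS \<and>
            run delta q0' s1' q1' \<and> run delta q1' s2' q2' \<and>
            lab ell s1' = u \<and> lab ell s2' = w)" for w
    define SR where "SR w \<longleftrightarrow> (\<exists>s q'. run delta q1 s q' \<and> lab ell s = w)" for w
    have q1Q: "q1 \<in> Q" using H assms(2) by auto
    have "NS (lab ell s2)"
    proof (rule ccontr)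
      assume nNS: "\<not> NS (lab ell s2)"
      have "\<exists>w. SR w \<and> \<not> NS w" using nNS H unfolding SR_def by blast
      then have "\<exists>n. \<exists>w. length w = n \<and> SR w \<and> \<not> NS w" by blast
      from exists_least_iff[THEN iffD1, OF this] obtain n where
        n1: "\<exists>w. length w = n \<and> SR w \<and> \<not> NS w"
        and n2: "\<And>m. m < n \<Longrightarrow> \<not> (\<exists>w. length w = m \<and> SR w \<and> \<not> NS w)" by blast
      from n1 obtain w where w: "length w = n" "SR w" "\<not> NS w" by blast
      have mini: "\<And>w'. length w' < length w \<Longrightarrow> SR w' \<Longrightarrow> NS w'" using n2 w(1) by blast
      from w(2) obtain sw qw where sw: "run delta q1 sw qw" "lab ell sw = w"
        unfolding SR_def by blast
      define F where "F i = {q \<in> Q. \<exists>s q'. run delta q s q' \<and> lab ell s = drop i w}" for i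
      have Fcomp: "NS w" if "NS (take i w)" "F i = Q" for i
      proof -
        from that(1) obtain q0' q1' q2' s1' s2' where A: "q0' \<in> Q0" "q1' \<in> Q - QS"
            "run delta q0' s1' q1'" "run delta q1' s2' q2'" "lab ell s1' = u" "lab ell s2' = take i w"
          unfolding NS_def by blast
        have "q2' \<in> Q" using run_in_Q[OF A(4) _ dQ] A(2) by blast
        then have "q2' \<in> F i" using that(2) by simp
        then obtain s q' where "run delta q2' s q'" "lab ell s = drop i w" unfolding F_def by blast
        then have "run delta q1' (s2' @ s) q'" "lab ell (s2' @ s) = w"
          using A by (auto simp: run_append lab_append)
        then show ?thesis unfolding NS_def using A by blast
      qed
      have prefix: "\<exists>p sa. run delta q1 sa p \<and> lab ell sa = take i w \<and> p \<in> F i" for i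
      proof -
        from run_split[OF sw(1), of ell "take i w" "drop i w"] sw(2) obtain sa sb p where
          "run delta q1 sa p" "run delta p sb qw" "lab ell sa = take i w" "lab ell sb = drop i w"
          by auto
        moreover have "p \<in> Q" using run_in_Q[OF \<open>run delta q1 sa p\<close> q1Q dQ] .
        ultimately show ?thesis unfolding F_def by blast
      qed
      have A: "F i \<in> Pow Q - {{}, Q}" if "i < length w" for i
      proof -
        from prefix[of i] obtain p sa where P: "run delta q1 sa p" "lab ell sa = take i w" "p \<in> F i"
          by blast
        have "SR (take i w)" using P unfolding SR_def by blast
        then have "NS (take i w)" using mini that by simp
        then have "F i \<noteq> Q" using Fcomp w(3) by blast
        moreover have "F i \<noteq> {}" using P by blast
        ultimately show ?thesis unfolding F_def by auto
      qed
      have B: "F i \<noteq> F j" if "i < j" "j < length w" for i j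
      proof
        assume eq: "F i = F j"
        define w' where "w' = take i w @ drop j w"
        have len: "length w' < length w" using that unfolding w'_def by simp
        from prefix[of i] obtain p sa where P: "run delta q1 sa p" "lab ell sa = take i w" "p \<in> F i"
          by blast
        from P(3) eq obtain s q' where "run delta p s q'" "lab ell s = drop j w"
          unfolding F_def by blast
        then have "SR w'" using P unfolding SR_def w'_def
          by (intro exI[of _ "sa @ s"] exI[of _ q']) (auto simp: run_append lab_append)
        then have "NS w'" using mini len by simp
        then obtain q0' q1' q2' s1' s2' where N: "q0' \<in> Q0" "q1' \<in> Q - QS"
            "run delta q0' s1' q1'" "run delta q1' s2' q2'" "lab ell s1' = u" "lab ell s2' = w'"
          unfolding NS_def by blast
        from run_split[OF N(4), of ell "take i w" "drop j w"] N(6) obtain t1 t2 x where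
          T: "run delta q1' t1 x" "run delta x t2 q2'" "lab ell t1 = take i w" "lab ell t2 = drop j w"
          unfolding w'_def by auto
        have "x \<in> Q" using run_in_Q[OF T(1) _ dQ] N(2) by blast
        then have "x \<in> F j" using T(2,4) unfolding F_def by blast
        then have "x \<in> F i" using eq by simp
        then obtain s3 q3 where "run delta x s3 q3" "lab ell s3 = drop i w" unfolding F_def by blast
        then have "run delta q1' (t1 @ s3) q3" "lab ell (t1 @ s3) = w"
          using T by (auto simp: run_append lab_append)
        then have "NS w" unfolding NS_def using N by blast
        then show False using w(3) by simp
      qed
      have inj: "inj_on F {..<length w}"
        by (rule inj_onI) (metis B lessThan_iff linorder_neqE_nat)
      have sub: "F ` {..<length w} \<subseteq> Pow Q - {{}, Q}" using A by auto
      have "card {..<length w} \<le> card (Pow Q - {{}, Q})"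
        using card_inj_on_le[OF inj sub] finQ by simp
      moreover have "card (Pow Q - {{}, Q}) = 2 ^ card Q - 2"
      proof -
        have "Q \<noteq> {}" using q1Q by auto
        then have "{{}, Q} \<subseteq> Pow Q" "card {{}, Q} = 2" by auto
        then show ?thesis using finQ by (simp add: card_Diff_subset card_Pow)
      qed
      ultimately have "length w \<le> 2 ^ card Q - 2" by simp
      moreover have "2 ^ card Q \<ge> (2::nat)"
      proof -
        have "card Q \<ge> 1" using q1Q finQ by (metis One_nat_def Suc_leI card_gt_0_iff empty_iff)
        then show ?thesis by (metis power_increasing power_one_right zero_less_numeral one_le_numeral)
      qed
      ultimately have "length w \<le> K" using Kb by linarith
      then have "length (lab ell sw) \<le> K" using sw by simp
      then obtain q0' q1' q2' s1' s2' where "q0' \<in> Q0" "q1' \<in> Q - QS"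
            "run delta q0' s1' q1'" "run delta q1' s2' q2'"
            "lab ell s1 = lab ell s1'" "lab ell sw = lab ell s2'"
        using KO H sw(1) unfolding K_step_opaque_def by meson
      then have "NS (lab ell sw)" unfolding NS_def u_def by metis
      then have "NS w" using sw by simp
      then show False using w(3) by simp
    qed
    then show "\<exists>q0' q1' q2' s1' s2'. q0' \<in> Q0 \<and> q1' \<in> Q - QS \<and>
            run delta q0' s1' q1' \<and> run delta q1' s2' q2' \<and>
            lab ell s1 = lab ell s1' \<and> lab ell s2 = lab ell s2'"
      unfolding NS_def u_def by metis
  qed
qed

end
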